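(* Let $(M,J)$ be a closed almost complex manifold. Then $J$ is $C^{\infty}$ pure if and only if $\pi^{1,1}\mathbf B\cap\mathbf Z^{1,1}=\mathbf B^{1,1}$, and this condition is equivalent to $\pi^{(2,0),(0,2)}\mathbf B\cap\mathbf Z^{(2,0),(0,2)}=\mathbf B^{(2,0),(0,2)}$. Consequently, $J$ being $C^{\infty}$ pure is equivalent to $\iota^{1,1}$ being injective, which is also equivalent to $\iota^{(2,0),(0,2)}$ being injective.
   Context: Real 2-forms split as $J$-invariant ($\alpha(Jv,Jw)=\alpha(v,w)$, the space $\Omega^{1,1}$) plus $J$-anti-invariant ($\alpha(Jv,Jw)=-\alpha(v,w)$, the space $\Omega^{(2,0),(0,2)}$), with projections $\pi^{1,1},\pi^{(2,0),(0,2)}$. $\mathbf Z,\mathbf B$ are the closed and exact real 2-forms; for $S=(1,1)$ or $(2,0),(0,2)$, $\mathbf Z^S=\mathbf Z\cap\Omega^S$, $\mathbf B^S=\mathbf B\cap\Omega^S$. $\iota^{S}:\mathbf Z^S/\mathbf B^S\to\pi^S\mathbf Z/\pi^S\mathbf B$ is the homomorphism induced by inclusion. $H_J^{S}(M)_{\mathbb R}=\mathbf Z^S/\mathbf B^S$, viewed as a subspace of $H^2(M;\mathbb R)$. $J$ is $C^\infty$ pure if $H_J^{1,1}(M)_{\mathbb R}\cap H_J^{(2,0),(0,2)}(M)_{\mathbb R}=0$ in $H^2(M;\mathbb R)$. *)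

theory Defs
  imports Complex_Main
begin

text \<open>The type 'v plays the role of the real vector space of real 2-forms
Omega^2(M); Jt is the induced action  alpha |-> alpha(J.,J.)  (a linear involution);
Z and B are the subspaces of closed and exact 2-forms (B is contained in Z).\<close>

definition Omega11 :: "('v::real_vector \<Rightarrow> 'v) \<Rightarrow> 'v set" where
  "Omega11 Jt = {a. Jt a = a}"

definition OmegaA :: "('v::real_vector \<Rightarrow> 'v) \<Rightarrow> 'v set" where
  "OmegaA Jt = {a. Jt a = - a}"

definition pi11 :: "('v::real_vector \<Rightarrow> 'v) \<Rightarrow> 'v \<Rightarrow> 'v" where
  "pi11 Jt a = (1/2) *\<^sub>R (a + Jt a)"

definition piA :: "('v::real_vector \<Rightarrow> 'v) \<Rightarrow> 'v \<Rightarrow> 'v" where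
  "piA Jt a = (1/2) *\<^sub>R (a - Jt a)"

definition coset :: "'v::real_vector set \<Rightarrow> 'v \<Rightarrow> 'v set" where
  "coset W a = (\<lambda>x. a + x) ` W"

text \<open>H_J^S(M)_R viewed inside H^2 = Z/B: classes of closed forms of type S.\<close>
definition HJ :: "'v::real_vector set \<Rightarrow> 'v set \<Rightarrow> 'v set \<Rightarrow> 'v set set" where
  "HJ OmS Z B = coset B ` (Z \<inter> OmS)"

text \<open>C^infty purity: H^{1,1} \<inter> H^{(2,0),(0,2)} = 0 in H^2 = Z/B (0 is the class B).\<close>
definition C_inf_pure :: "('v::real_vector \<Rightarrow> 'v) \<Rightarrow> 'v set \<Rightarrow> 'v set \<Rightarrow> bool" where
  "C_inf_pure Jt Z B \<longleftrightarrow> HJ (Omega11 Jt) Z B \<inter> HJ (OmegaA Jt) Z B \<subseteq> {coset B 0}"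

text \<open>Injectivity of iota^S : Z^S/B^S \<rightarrow> pi^S Z / pi^S B, [a] \<mapsto> [a].\<close>
definition iota_injective ::
  "'v::real_vector set \<Rightarrow> ('v \<Rightarrow> 'v) \<Rightarrow> 'v set \<Rightarrow> 'v set \<Rightarrow> bool" where
  "iota_injective OmS piS Z B \<longleftrightarrow>
     (\<forall>a\<in>Z \<inter> OmS. \<forall>a'\<in>Z \<inter> OmS.
        coset (piS ` B) a = coset (piS ` B) a' \<longrightarrow> coset (B \<inter> OmS) a = coset (B \<inter> OmS) a')"

end

theory Submission
  imports Defs
begin

lemma half_sum: "(1/2::real) *\<^sub>R (a + b) + (1/2::real) *\<^sub>R (a - b) = (a::'v::real_vector)"
proof -
  have "(a + b) + (a - b) = a + a" by simp
  then have "(1/2::real) *\<^sub>R ((a + b) + (a - b)) = a" by (simp add: scaleR_half_double)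
  then show ?thesis by (simp only: scaleR_add_right)
qed

lemma subspace_img:
  assumes "linear f" "subspace S"
  shows "subspace (f ` S)"
  unfolding subspace_def
proof (intro conjI ballI allI)
  have "f 0 = 0" using assms(1) by (rule linear_0)
  moreover have "0 \<in> S" using assms(2) by (rule subspace_0)
  ultimately show "0 \<in> f ` S" by (metis image_eqI)
next
  fix x y assume "x \<in> f ` S" "y \<in> f ` S"
  then obtain u v where "u \<in> S" "v \<in> S" "x = f u" "y = f v" by auto
  moreover have "f (u + v) = f u + f v" using assms(1) by (rule linear_add)
  moreover have "u + v \<in> S" using assms(2) \<open>u \<in> S\<close> \<open>v \<in> S\<close> by (rule subspace_add)
  ultimately show "x + y \<in> f ` S" by (metis image_eqI)
next
  fix c :: real and x assume "x \<in> f ` S"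
  then obtain u where "u \<in> S" "x = f u" by auto
  moreover have "f (c *\<^sub>R u) = c *\<^sub>R f u" using assms(1) by (rule linear_scale)
  moreover have "c *\<^sub>R u \<in> S" using assms(2) \<open>u \<in> S\<close> by (rule subspace_scale)
  ultimately show "c *\<^sub>R x \<in> f ` S" by (metis image_eqI)
qed

lemma coset_eq:
  assumes "subspace W"
  shows "coset W a = coset W b \<longleftrightarrow> a - b \<in> W"
proof
  assume h: "coset W a = coset W b"
  have "a \<in> coset W a" unfolding coset_def using subspace_0[OF assms] by force
  then obtain w where "w \<in> W" "a = b + w" using h unfolding coset_def by auto
  then show "a - b \<in> W" by simp
next
  assume h: "a - b \<in> W"
  show "coset W a = coset W b"
  proof (unfold coset_def, safe)
    fix x assume "x \<in> W"
    then have "(a - b) + x \<in> W" using h subspace_add[OF assms] by blast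
    moreover have "a + x = b + ((a - b) + x)" by simp
    ultimately show "a + x \<in> (\<lambda>x. b + x) ` W" by blast
  next
    fix x assume "x \<in> W"
    then have "x - (a - b) \<in> W" using h subspace_diff[OF assms] by blast
    moreover have "b + x = a + (x - (a - b))" by simp
    ultimately show "b + x \<in> (\<lambda>x. a + x) ` W" by blast
  qed
qed

theorem lemma2p9:
  fixes Jt :: "'v::real_vector \<Rightarrow> 'v" and Z B :: "'v set"
  assumes "linear Jt" and "\<And>a. Jt (Jt a) = a"
    and "subspace Z" and "subspace B" and "B \<subseteq> Z"
  shows "(C_inf_pure Jt Z B \<longleftrightarrow> pi11 Jt ` B \<inter> (Z \<inter> Omega11 Jt) = B \<inter> Omega11 Jt)
       \<and> (pi11 Jt ` B \<inter> (Z \<inter> Omega11 Jt) = B \<inter> Omega11 Jt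
            \<longleftrightarrow> piA Jt ` B \<inter> (Z \<inter> OmegaA Jt) = B \<inter> OmegaA Jt)
       \<and> (C_inf_pure Jt Z B \<longleftrightarrow> iota_injective (Omega11 Jt) (pi11 Jt) Z B)
       \<and> (iota_injective (Omega11 Jt) (pi11 Jt) Z B \<longleftrightarrow> iota_injective (OmegaA Jt) (piA Jt) Z B)"
proof -
  note lin = assms(1) and inv = assms(2) and sZ = assms(3) and sB = assms(4) and BZ = assms(5)
  let ?p = "pi11 Jt" and ?q = "piA Jt"
  have Jadd: "Jt (x + y) = Jt x + Jt y" for x y using linear_add[OF lin] .
  have Jdiff: "Jt (x - y) = Jt x - Jt y" for x y using linear_diff[OF lin] .
  have Jscale: "Jt (c *\<^sub>R x) = c *\<^sub>R Jt x" for c x using linear_scale[OF lin] .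
  have Jneg: "Jt (- x) = - Jt x" for x using linear_neg[OF lin] .
  have sum: "?p a + ?q a = a" for a
    unfolding pi11_def piA_def by (rule half_sum)
  have p_fix: "Jt (?p a) = ?p a" for a
    unfolding pi11_def by (simp add: Jscale Jadd inv add.commute)
  have q_fix: "Jt (?q a) = - ?q a" for a
    unfolding piA_def by (simp add: Jscale Jdiff inv) (metis minus_diff_eq scaleR_minus_right)
  have p_on11: "Jt a = a \<Longrightarrow> ?p a = a" for a
    unfolding pi11_def by (simp add: scaleR_half_double)
  have q_onA: "Jt a = - a \<Longrightarrow> ?q a = a" for a
    unfolding piA_def by (simp add: scaleR_half_double)
  have pB: "subspace (?p ` B)"
  proof -
    have "linear ?p" unfolding pi11_def
      by (rule linearI) (simp_all add: Jadd Jscale algebra_simps scaleR_add_right)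
    then show ?thesis using sB subspace_img by blast
  qed
  have qB: "subspace (?q ` B)"
  proof -
    have "linear ?q" unfolding piA_def
      by (rule linearI) (simp_all add: Jdiff Jadd Jscale algebra_simps scaleR_add_right scaleR_diff_right)
    then show ?thesis using sB subspace_img by blast
  qed
  have sB11: "subspace (B \<inter> Omega11 Jt)"
    unfolding subspace_def Omega11_def
  proof (intro conjI ballI allI)
    show "0 \<in> B \<inter> {a. Jt a = a}" using subspace_0[OF sB] linear_0[OF lin] by simp
  next
    fix x y assume "x \<in> B \<inter> {a. Jt a = a}" "y \<in> B \<inter> {a. Jt a = a}"
    then show "x + y \<in> B \<inter> {a. Jt a = a}" using subspace_add[OF sB] Jadd[of x y] by simp
  next
    fix c :: real and x assume "x \<in> B \<inter> {a. Jt a = a}"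
    then show "c *\<^sub>R x \<in> B \<inter> {a. Jt a = a}" using subspace_scale[OF sB] Jscale[of c x] by simp
  qed
  have sBA: "subspace (B \<inter> OmegaA Jt)"
    unfolding subspace_def OmegaA_def
  proof (intro conjI ballI allI)
    show "0 \<in> B \<inter> {a. Jt a = - a}" using subspace_0[OF sB] linear_0[OF lin] by simp
  next
    fix x y assume "x \<in> B \<inter> {a. Jt a = - a}" "y \<in> B \<inter> {a. Jt a = - a}"
    then show "x + y \<in> B \<inter> {a. Jt a = - a}" using subspace_add[OF sB] Jadd[of x y] by simp
  next
    fix c :: real and x assume "x \<in> B \<inter> {a. Jt a = - a}"
    then show "c *\<^sub>R x \<in> B \<inter> {a. Jt a = - a}" using subspace_scale[OF sB] Jscale[of c x] by simp
  qed
  define P where "P \<longleftrightarrow> (\<forall>a\<in>Z. \<forall>b\<in>Z. Jt a = a \<longrightarrow> Jt b = - b \<longrightarrow> a - b \<in> B \<longrightarrow> a \<in> B)"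
  have pure: "C_inf_pure Jt Z B \<longleftrightarrow> P"
  proof
    assume h: "C_inf_pure Jt Z B"
    show P unfolding P_def
    proof (intro ballI impI)
      fix a b assume a: "a \<in> Z" "Jt a = a" and b: "b \<in> Z" "Jt b = - b" and ab: "a - b \<in> B"
      have "coset B a = coset B b" using coset_eq[OF sB] ab by blast
      then have "coset B a \<in> HJ (Omega11 Jt) Z B \<inter> HJ (OmegaA Jt) Z B"
        unfolding HJ_def Omega11_def OmegaA_def using a b by auto
      then have "coset B a = coset B 0" using h unfolding C_inf_pure_def by blast
      then show "a \<in> B" using coset_eq[OF sB] by simp
    qed
  next
    assume h: P
    show "C_inf_pure Jt Z B" unfolding C_inf_pure_def
    proof
      fix X assume "X \<in> HJ (Omega11 Jt) Z B \<inter> HJ (OmegaA Jt) Z B"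
      then obtain a b where a: "a \<in> Z" "Jt a = a" and b: "b \<in> Z" "Jt b = - b"
        and Xa: "X = coset B a" and Xb: "X = coset B b"
        unfolding HJ_def Omega11_def OmegaA_def by auto
      have "a - b \<in> B" using coset_eq[OF sB] Xa Xb by blast
      then have "a \<in> B" using h a b unfolding P_def by blast
      then have "coset B a = coset B 0" using coset_eq[OF sB] by simp
      then show "X \<in> {coset B 0}" using Xa by simp
    qed
  qed
  have c1: "P \<longleftrightarrow> ?p ` B \<inter> (Z \<inter> Omega11 Jt) = B \<inter> Omega11 Jt"
  proof
    assume h: P
    show "?p ` B \<inter> (Z \<inter> Omega11 Jt) = B \<inter> Omega11 Jt"
    proof (intro equalityI subsetI)
      fix x assume "x \<in> ?p ` B \<inter> (Z \<inter> Omega11 Jt)"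
      then obtain \<beta> where \<beta>: "\<beta> \<in> B" "x = ?p \<beta>" and x: "x \<in> Z" "Jt x = x"
        unfolding Omega11_def by auto
      have "\<beta> \<in> Z" using \<beta> BZ by auto
      have eq: "x - \<beta> = - ?q \<beta>" using sum[of \<beta>] \<beta> by (simp add: algebra_simps)
      have "x - \<beta> \<in> Z" using subspace_diff[OF sZ] x \<open>\<beta> \<in> Z\<close> by blast
      moreover have "Jt (x - \<beta>) = - (x - \<beta>)" using eq q_fix[of \<beta>] Jneg by simp
      moreover have "x - (x - \<beta>) \<in> B" using \<beta> by simp
      ultimately have "x \<in> B" using h x unfolding P_def by blast
      then show "x \<in> B \<inter> Omega11 Jt" using x unfolding Omega11_def by simp
    next
      fix x assume "x \<in> B \<inter> Omega11 Jt"
      then show "x \<in> ?p ` B \<inter> (Z \<inter> Omega11 Jt)"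
        using p_on11[of x] BZ unfolding Omega11_def by (auto intro: image_eqI[where x=x])
    qed
  next
    assume h: "?p ` B \<inter> (Z \<inter> Omega11 Jt) = B \<inter> Omega11 Jt"
    show P unfolding P_def
    proof (intro ballI impI)
      fix a b assume a: "a \<in> Z" "Jt a = a" and b: "b \<in> Z" "Jt b = - b" and ab: "a - b \<in> B"
      have "?p (a - b) = a"
        proof -
        have "(a - b) + Jt (a - b) = a + a" using a b by (simp add: Jdiff)
        then show ?thesis unfolding pi11_def by (metis scaleR_half_double)
      qed
      then have "a \<in> ?p ` B" using ab by (metis image_eqI)
      then show "a \<in> B" using h a unfolding Omega11_def by blast
    qed
  qed
  have c2: "P \<longleftrightarrow> ?q ` B \<inter> (Z \<inter> OmegaA Jt) = B \<inter> OmegaA Jt"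
  proof
    assume h: P
    show "?q ` B \<inter> (Z \<inter> OmegaA Jt) = B \<inter> OmegaA Jt"
    proof (intro equalityI subsetI)
      fix x assume "x \<in> ?q ` B \<inter> (Z \<inter> OmegaA Jt)"
      then obtain \<beta> where \<beta>: "\<beta> \<in> B" "x = ?q \<beta>" and x: "x \<in> Z" "Jt x = - x"
        unfolding OmegaA_def by auto
      have "\<beta> \<in> Z" using \<beta> BZ by auto
      have eq: "\<beta> - x = ?p \<beta>" using sum[of \<beta>] \<beta> by (simp add: algebra_simps)
      have "\<beta> - x \<in> Z" using subspace_diff[OF sZ] x \<open>\<beta> \<in> Z\<close> by blast
      moreover have "Jt (\<beta> - x) = \<beta> - x" using eq p_fix[of \<beta>] by simp
      moreover have "- x \<in> Z" using x subspace_neg[OF sZ] by blast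
      moreover have "Jt (- x) = - (- x)" using x Jneg by simp
      moreover have "(\<beta> - x) - (- x) \<in> B" using \<beta> by simp
      ultimately have "\<beta> - x \<in> B" using h \<open>\<beta> - x \<in> Z\<close> unfolding P_def by blast
      then have "\<beta> - (\<beta> - x) \<in> B" using subspace_diff[OF sB] \<beta> by blast
      then have "x \<in> B" by simp
      then show "x \<in> B \<inter> OmegaA Jt" using x unfolding OmegaA_def by simp
    next
      fix x assume "x \<in> B \<inter> OmegaA Jt"
      then show "x \<in> ?q ` B \<inter> (Z \<inter> OmegaA Jt)"
        using q_onA[of x] BZ unfolding OmegaA_def by (auto intro: image_eqI[where x=x])
    qed
  next
    assume h: "?q ` B \<inter> (Z \<inter> OmegaA Jt) = B \<inter> OmegaA Jt"
    show P unfolding P_def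
    proof (intro ballI impI)
      fix a b assume a: "a \<in> Z" "Jt a = a" and b: "b \<in> Z" "Jt b = - b" and ab: "a - b \<in> B"
      have "?q (a - b) = - b"
        proof -
        have "(a - b) - Jt (a - b) = (- b) + (- b)" using a b by (simp add: Jdiff)
        then show ?thesis unfolding piA_def by (metis scaleR_half_double)
      qed
      then have "- b \<in> ?q ` B" using ab by (metis image_eqI)
      moreover have "- b \<in> Z" using b subspace_neg[OF sZ] by blast
      moreover have "Jt (- b) = - (- b)" using b Jneg by simp
      ultimately have "- b \<in> B" using h unfolding OmegaA_def by blast
      then have "(a - b) - (- b) \<in> B" using ab subspace_diff[OF sB] by blast
      then show "a \<in> B" by simp
    qed
  qed
  have i1: "iota_injective (Omega11 Jt) ?p Z B \<longleftrightarrow> ?p ` B \<inter> (Z \<inter> Omega11 Jt) = B \<inter> Omega11 Jt"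
  proof
    assume h: "iota_injective (Omega11 Jt) ?p Z B"
    show "?p ` B \<inter> (Z \<inter> Omega11 Jt) = B \<inter> Omega11 Jt"
    proof (intro equalityI subsetI)
      fix x assume x: "x \<in> ?p ` B \<inter> (Z \<inter> Omega11 Jt)"
      have z: "0 \<in> Z \<inter> Omega11 Jt" using subspace_0[OF sZ] linear_0[OF lin] unfolding Omega11_def by simp
      have "coset (?p ` B) x = coset (?p ` B) 0" using coset_eq[OF pB] x by simp
      then have "coset (B \<inter> Omega11 Jt) x = coset (B \<inter> Omega11 Jt) 0"
        using h x z unfolding iota_injective_def by blast
      then show "x \<in> B \<inter> Omega11 Jt" using coset_eq[OF sB11] by simp
    next
      fix x assume "x \<in> B \<inter> Omega11 Jt"
      then show "x \<in> ?p ` B \<inter> (Z \<inter> Omega11 Jt)"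
        using p_on11[of x] BZ unfolding Omega11_def by (auto intro: image_eqI[where x=x])
    qed
  next
    assume h: "?p ` B \<inter> (Z \<inter> Omega11 Jt) = B \<inter> Omega11 Jt"
    show "iota_injective (Omega11 Jt) ?p Z B" unfolding iota_injective_def
    proof (intro ballI impI)
      fix a a' assume a: "a \<in> Z \<inter> Omega11 Jt" and a': "a' \<in> Z \<inter> Omega11 Jt"
        and e: "coset (?p ` B) a = coset (?p ` B) a'"
      have "a - a' \<in> ?p ` B" using e coset_eq[OF pB] by blast
      moreover have "a - a' \<in> Z" using a a' subspace_diff[OF sZ] by blast
      moreover have "a - a' \<in> Omega11 Jt" using a a' Jdiff unfolding Omega11_def by simp
      ultimately have "a - a' \<in> B \<inter> Omega11 Jt" using h by blast
      then show "coset (B \<inter> Omega11 Jt) a = coset (B \<inter> Omega11 Jt) a'" using coset_eq[OF sB11] by blast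
    qed
  qed
  have i2: "iota_injective (OmegaA Jt) ?q Z B \<longleftrightarrow> ?q ` B \<inter> (Z \<inter> OmegaA Jt) = B \<inter> OmegaA Jt"
  proof
    assume h: "iota_injective (OmegaA Jt) ?q Z B"
    show "?q ` B \<inter> (Z \<inter> OmegaA Jt) = B \<inter> OmegaA Jt"
    proof (intro equalityI subsetI)
      fix x assume x: "x \<in> ?q ` B \<inter> (Z \<inter> OmegaA Jt)"
      have z: "0 \<in> Z \<inter> OmegaA Jt" using subspace_0[OF sZ] linear_0[OF lin] unfolding OmegaA_def by simp
      have "coset (?q ` B) x = coset (?q ` B) 0" using coset_eq[OF qB] x by simp
      then have "coset (B \<inter> OmegaA Jt) x = coset (B \<inter> OmegaA Jt) 0"
        using h x z unfolding iota_injective_def by blast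
      then show "x \<in> B \<inter> OmegaA Jt" using coset_eq[OF sBA] by simp
    next
      fix x assume "x \<in> B \<inter> OmegaA Jt"
      then show "x \<in> ?q ` B \<inter> (Z \<inter> OmegaA Jt)"
        using q_onA[of x] BZ unfolding OmegaA_def by (auto intro: image_eqI[where x=x])
    qed
  next
    assume h: "?q ` B \<inter> (Z \<inter> OmegaA Jt) = B \<inter> OmegaA Jt"
    show "iota_injective (OmegaA Jt) ?q Z B" unfolding iota_injective_def
    proof (intro ballI impI)
      fix a a' assume a: "a \<in> Z \<inter> OmegaA Jt" and a': "a' \<in> Z \<inter> OmegaA Jt"
        and e: "coset (?q ` B) a = coset (?q ` B) a'"
      have "a - a' \<in> ?q ` B" using e coset_eq[OF qB] by blast
      moreover have "a - a' \<in> Z" using a a' subspace_diff[OF sZ] by blast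
      moreover have "a - a' \<in> OmegaA Jt" using a a' Jdiff unfolding OmegaA_def by simp
      ultimately have "a - a' \<in> B \<inter> OmegaA Jt" using h by blast
      then show "coset (B \<inter> OmegaA Jt) a = coset (B \<inter> OmegaA Jt) a'" using coset_eq[OF sBA] by blast
    qed
  qed
  show ?thesis
  proof (intro conjI)
    show "C_inf_pure Jt Z B \<longleftrightarrow> ?p ` B \<inter> (Z \<inter> Omega11 Jt) = B \<inter> Omega11 Jt"
      by (rule trans[OF pure c1])
    show "?p ` B \<inter> (Z \<inter> Omega11 Jt) = B \<inter> Omega11 Jt
            \<longleftrightarrow> ?q ` B \<inter> (Z \<inter> OmegaA Jt) = B \<inter> OmegaA Jt"
      by (rule trans[OF c1[symmetric] c2])
    show "C_inf_pure Jt Z B \<longleftrightarrow> iota_injective (Omega11 Jt) ?p Z B"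
      by (rule trans[OF trans[OF pure c1] i1[symmetric]])
    show "iota_injective (Omega11 Jt) ?p Z B \<longleftrightarrow> iota_injective (OmegaA Jt) ?q Z B"
      by (rule trans[OF trans[OF trans[OF i1 c1[symmetric]] c2] i2[symmetric]])
  qed
qed

end
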